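(* For each $j$ (indices mod $8g-4$), with $\ell$ denoting arc length on the unit circle: (i) there exist $a_j,b_j\in(P_j,Q_j)$ with $\ell(P_j,a_j)>\frac12\ell(P_j,Q_j)$ and $\ell(b_j,Q_j)>\frac12\ell(P_j,Q_j)$ such that $T_j(a_j)=P_{\rho(j)+1}$ and $T_{j-1}(b_j)=Q_{\theta(j-1)}$; (ii) for every $x\in[P_j,Q_j]$ with $\ell(P_j,x)\le\frac12\ell(P_j,Q_j)$, $T_j(x)\in[Q_{\sigma(j)+1},P_{\sigma(j)+2}]$; (iii) for every $x\in[P_j,Q_j]$ with $\ell(x,Q_j)\le\frac12\ell(P_j,Q_j)$, $T_{j-1}(x)\in[Q_{\theta(j-1)},P_{\theta(j-1)+1}]$.
   Context: Setting. Fix $g\ge 2$; indices are mod $8g-4$. Let $\mathcal F$ be the regular hyperbolic $(8g-4)$-gon in the unit disk centered at $0$ with all interior angles $\pi/2$, sides labeled $1,\dots,8g-4$ counterclockwise, side $i$ joining vertices $V_i$ and $V_{i+1}$. The complete geodesic extending side $i$ goes from $P_i$ (beyond $V_i$) to $Q_{i+1}$ (beyond $V_{i+1}$) on the unit circle; counterclockwise order $P_1,Q_1,P_2,Q_2,\dots,P_{8g-4},Q_{8g-4}$. $\sigma(i)=4g-i$ ($i$ odd), $\sigma(i)=2-i$ ($i$ even), $\rho(i)=\sigma(i)+1$, $\theta(i)=\sigma(i)-1$. $T_i$ is the Möbius transformation mapping side $i$ onto side $\sigma(i)$, with isometric circle the geodesic $P_iQ_{i+1}$, mapped onto the geodesic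 $Q_{\sigma(i)+1}P_{\sigma(i)}$, inside to outside. Arcs $[A,B]$, $(A,B)$ are counterclockwise from $A$ to $B$, and $\ell(A,B)$ is the arc length of $[A,B]$. *)

theory Defs
  imports "HOL-Analysis.Analysis"
begin

definition nsides :: "nat \<Rightarrow> real" where
  "nsides g = 8 * real g - 4"

text \<open>The polygon is placed so that the
  midpoint of side i lies on the ray of angle 2 pi i / N; this fixes the (irrelevant)
  rotation of the regular polygon.  Indices are integers, everything is periodic mod N.\<close>
definition side_dir :: "nat \<Rightarrow> int \<Rightarrow> real" where
  "side_dir g i = 2 * pi * real_of_int i / nsides g"

text \<open>Half the angular width of the geodesic extending a side.  Two adjacent side
  geodesics (equal circles orthogonal to the unit circle, centres at angular distance
  2 pi / N) meet at right angles (interior angle pi/2) iff cos(beta)^2 = cos(2 pi / N).\<close>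
definition half_width :: "nat \<Rightarrow> real" where
  "half_width g = arccos (sqrt (cos (2 * pi / nsides g)))"

text \<open>Endpoints of geodesics: side i extends to the geodesic from P i to Q (i+1).\<close>
definition Pt :: "nat \<Rightarrow> int \<Rightarrow> complex" where
  "Pt g i = cis (side_dir g i - half_width g)"

definition Qt :: "nat \<Rightarrow> int \<Rightarrow> complex" where
  "Qt g i = cis (side_dir g (i - 1) + half_width g)"

definition sigma :: "nat \<Rightarrow> int \<Rightarrow> int" where
  "sigma g i = (if odd i then 4 * int g - i else 2 - i)"

definition rho :: "nat \<Rightarrow> int \<Rightarrow> int" where
  "rho g i = sigma g i + 1"

definition theta :: "nat \<Rightarrow> int \<Rightarrow> int" where
  "theta g i = sigma g i - 1"

text \<open>The isometric circle of T i: the geodesic P i Q (i+1), i.e. the circle orthogonal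
  to the unit circle with centre (1/cos beta) e^{i alpha_i} and radius tan beta.\<close>
definition iso_center :: "nat \<Rightarrow> int \<Rightarrow> complex" where
  "iso_center g i = complex_of_real (1 / cos (half_width g)) * cis (side_dir g i)"

definition iso_radius :: "nat \<Rightarrow> real" where
  "iso_radius g = tan (half_width g)"

text \<open>The Moebius transformation T i: inversion in its isometric circle followed by the
  Euclidean reflection in the line through 0 bisecting the directions of sides i and
  sigma(i).  It is orientation preserving, has isometric circle P i Q (i+1), maps it
  onto Q (sigma i + 1) P (sigma i) (inside to outside) and maps side i onto side sigma i.\<close>
definition Tmap :: "nat \<Rightarrow> int \<Rightarrow> complex \<Rightarrow> complex" where
  "Tmap g i z =
     (let w = iso_center g i + complex_of_real ((iso_radius g)\<^sup>2) / cnj (z - iso_center g i)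
      in cis (side_dir g i + side_dir g (sigma g i)) * cnj w)"

definition arclen :: "complex \<Rightarrow> complex \<Rightarrow> real" where
  "arclen A B = (if 0 \<le> Arg (B / A) then Arg (B / A) else Arg (B / A) + 2 * pi)"

definition closed_arc :: "complex \<Rightarrow> complex \<Rightarrow> complex set" where
  "closed_arc A B = {x. cmod x = 1 \<and> arclen A x \<le> arclen A B}"

definition open_arc :: "complex \<Rightarrow> complex \<Rightarrow> complex set" where
  "open_arc A B = {x. cmod x = 1 \<and> 0 < arclen A x \<and> arclen A x < arclen A B}"

end

theory Submission
  imports Defs
begin

lemma tan_ge_x: assumes "0 \<le> x" "x < pi/2" shows "x \<le> tan (x::real)"
proof -
  let ?f = "\<lambda>x. tan x - x"
  have "?f 0 \<le> ?f x"
  proof (rule DERIV_nonneg_imp_nondecreasing[OF assms(1)])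
    fix u assume u: "0 \<le> u" "u \<le> x"
    then have c: "cos u > 0" using assms by (intro cos_gt_zero_pi) auto
    have "cos u ^2 \<le> 1" using abs_cos_le_one[of u] by (simp add: abs_square_le_1) 
    then have "inverse (cos u ^2) - 1 \<ge> 0" using c by (simp add: field_simps)
    moreover have "(?f has_real_derivative inverse (cos u ^2) - 1) (at u)"
      using c by (auto intro!: derivative_eq_intros)
    ultimately show "\<exists>y. (?f has_real_derivative y) (at u) \<and> 0 \<le> y" by blast
  qed
  then show ?thesis by simp
qed
lemma tan_le: assumes "0 \<le> x" "x < pi/2" shows "tan (x::real) \<le> x / cos x"
proof -
  have "cos x > 0" using assms by (intro cos_gt_zero_pi) auto
  then show ?thesis using sin_x_le_x[OF assms(1)] by (simp add: tan_def divide_right_mono)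
qed

lemma cc: "cos_coeff 0 = 1" "cos_coeff 1 = 0" "cos_coeff 2 = -1/2" "cos_coeff 3 = 0"
  "cos_coeff 4 = 1/24" "cos_coeff 5 = 0"
  by (simp_all add: cos_coeff_def fact_numeral)
lemma s4: "(\<Sum>m<4. f m) = f 0 + f 1 + f 2 + (f 3::real)" for f :: "nat \<Rightarrow> real"
  by (simp add: eval_nat_numeral)
lemma s6: "(\<Sum>m<6. f m) = f 0 + f 1 + f 2 + f 3 + f 4 + (f 5::real)" for f :: "nat \<Rightarrow> real"
  by (simp add: eval_nat_numeral)
lemma s2: "(\<Sum>m<2. f m) = f 0 + (f 1::real)" for f :: "nat \<Rightarrow> real"
  by (simp add: eval_nat_numeral)
lemma cos_le4: "cos (x::real) \<le> 1 - x^2/2 + x^4/24"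
proof -
  obtain t where e: "cos x = (\<Sum>m<4. cos_coeff m * x ^ m) + (cos(t + 1/2 * real 4 * pi) / fact 4) * x ^ 4"
    using Maclaurin_cos_expansion by blast
  have "cos(t + 1/2 * real 4 * pi) * x^4 \<le> 1 * x^4" 
    by (rule mult_right_mono) (simp_all add: zero_le_even_power)
  moreover have "(fact 4::real) = 24" by (simp add: fact_numeral)
  ultimately show ?thesis using e unfolding s4 cc by simp
qed
lemma cos_ge6: "cos (x::real) \<ge> 1 - x^2/2 + x^4/24 - x^6/720"
proof -
  obtain t where e: "cos x = (\<Sum>m<6. cos_coeff m * x ^ m) + (cos(t + 1/2 * real 6 * pi) / fact 6) * x ^ 6"
    using Maclaurin_cos_expansion by blast
  have "cos(t + 1/2 * real 6 * pi) * x^6 \<ge> (-1) * x^6" 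
    by (rule mult_right_mono) (simp_all add: zero_le_even_power)
  moreover have "(fact 6::real) = 720" by (simp add: fact_numeral)
  ultimately show ?thesis using e unfolding s6 cc by simp
qed
lemma cos_ge2: "cos (x::real) \<ge> 1 - x^2/2"
proof -
  obtain t where e: "cos x = (\<Sum>m<2. cos_coeff m * x ^ m) + (cos(t + 1/2 * real 2 * pi) / fact 2) * x ^ 2"
    using Maclaurin_cos_expansion by blast
  have "cos(t + 1/2 * real 2 * pi) * x^2 \<ge> (-1) * x^2" 
    by (rule mult_right_mono) simp_all
  moreover have "(fact 2::real) = 2" by (simp add: fact_numeral)
  ultimately show ?thesis using e unfolding s2 cc by simp
qed

lemma lin2: "(A::real) \<ge> 1 - 49/25*X/2 + 2401/625*Y/24 - 117649/15625*Z/720 \<Longrightarrow> B \<le> 1 - X/2 + Y/24 \<Longrightarrow>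
  Z \<le> 121/1600*X \<Longrightarrow> 0 \<le> X \<Longrightarrow> 0 \<le> Y \<Longrightarrow> B \<le> (1+A)/2"
  by (simp add: field_simps)

lemma beta_bounds:
  fixes d b :: real
  assumes d: "0 < d" "d \<le> pi/6" and b: "b = arccos (sqrt (cos d))"
  shows "cos b = sqrt (cos d)" "7/10*d \<le> b" "b \<le> 18/25*d"
proof -
  have "pi/6 \<le> (0.5236::real)" using pi_approx(2) by simp
  then have pi6: "d \<le> 0.5236" using d by linarith
  define e where "e = d^2"
  have e0: "0 \<le> e" and e1: "e \<le> 11/40" proof -
    have "d*d \<le> 0.5236*0.5236" using d pi6 by (intro mult_mono) auto
    then show "0 \<le> e" "e \<le> 11/40" unfolding e_def by (auto simp: power2_eq_square)
  qed
  have ee: "e*e \<le> 11/40 * e" using mult_right_mono[OF e1 e0] by simp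
  have eee: "e*e*e \<le> 121/1600 * e" using mult_right_mono[OF ee e0] mult_right_mono[OF e1 e0] by simp
  have cd: "0 < cos d" using d pi_approx by (intro cos_gt_zero_pi) auto
  have cd1: "cos d \<le> 1" by simp
  have sq: "0 \<le> sqrt (cos d)" "sqrt (cos d) \<le> 1" using cd cd1 by auto
  show cb: "cos b = sqrt (cos d)" unfolding b by (rule cos_arccos) (use sq in linarith)+
  have "- 1 \<le> sqrt (cos d)" using sq by linarith
  note ab = arccos_bounded[OF this sq(2)]
  have b0: "0 \<le> b" "b \<le> pi" using ab unfolding b by auto
  have "cos (18/25*d) ^ 2 = (1 + cos (2*(18/25*d)))/2" unfolding cos_double_cos[of "18/25*d"] by simp
  also have "\<dots> \<le> cos d"
  proof -
    have A: "cos (2*(18/25*d)) \<le> 1 - (2*(18/25*d))^2/2 + (2*(18/25*d))^4/24" by (rule cos_le4)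
    have B: "cos d \<ge> 1 - d^2/2 + d^4/24 - d^6/720" by (rule cos_ge6)
    have p: "d^4 = e*e" "d^6 = e*e*e" "(2*(18/25*d))^2 = 1296/625*e" "(2*(18/25*d))^4 = 1679616/390625*(e*e)"
      unfolding e_def by (simp_all add: power_mult_distrib power_divide flip: power_add power_mult)
    show ?thesis using A B ee eee e0 unfolding p e_def[symmetric] by (simp add: field_simps)
  qed
  finally have "cos (18/25*d) \<le> sqrt (cos d)" by (intro real_le_rsqrt)
  then show "b \<le> 18/25*d" using cb b0 d pi_approx by (subst cos_mono_le_eq[symmetric]) auto
  have cl: "0 \<le> cos (7/10*d)" using d pi_approx by (intro cos_ge_zero) auto
  have "cos d \<le> (1 + cos (2*(7/10*d)))/2"
  proof -
    have A: "cos (2*(7/10*d)) \<ge> 1 - (2*(7/10*d))^2/2 + (2*(7/10*d))^4/24 - (2*(7/10*d))^6/720" by (rule cos_ge6)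
    have B: "cos d \<le> 1 - d^2/2 + d^4/24" by (rule cos_le4)
    have p: "d^4 = e*e" "(2*(7/10*d))^2 = 49/25*e" "(2*(7/10*d))^4 = 2401/625*(e*e)" "(2*(7/10*d))^6 = 117649/15625*(e*e*e)"
      unfolding e_def by (simp_all add: power_mult_distrib power_divide flip: power_add power_mult)
    show ?thesis using lin2[OF A[unfolded p] B[unfolded p e_def[symmetric]] eee e0 mult_nonneg_nonneg[OF e0 e0]] by simp
  qed
  also have "\<dots> = cos (7/10*d) ^ 2" unfolding cos_double_cos[of "7/10*d"] by simp
  finally have "sqrt (cos d) \<le> sqrt (cos (7/10*d) ^ 2)" by (rule real_sqrt_le_mono)
  then have "sqrt (cos d) \<le> cos (7/10*d)" using cl by simp
  then show "7/10*d \<le> b" using cb b0 d pi_approx by (subst cos_mono_le_eq[symmetric]) auto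
qed

lemma tan_ub: assumes "0 \<le> x" "x*x \<le> 2*(1 - c)" "0 < c" "x < pi/2" shows "c * tan x \<le> (x::real)"
proof -
  have cx: "cos x \<ge> c" using cos_ge2[of x] assms(2) by (simp add: power2_eq_square)
  have t0: "0 \<le> tan x" using assms by (simp add: tan_pos_pi2_le)
  have "c * tan x \<le> cos x * tan x" using mult_right_mono[OF cx t0] .
  also have "\<dots> = sin x" using cx assms(3) by (simp add: tan_def)
  also have "\<dots> \<le> x" using sin_x_le_x[OF assms(1)] .
  finally show ?thesis .
qed

lemma ineqs:
  fixes d b :: real
  assumes d: "0 < d" "d \<le> pi/6" and b: "7/10*d \<le> b" "b \<le> 18/25*d"
  shows "tan (b/2) ^ 2 < tan (d/4) * tan (d - b/2)"
        "tan ((d-b)/2) * tan (d - b/2) < tan (b/2) ^ 2"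
proof -
  have "pi/6 \<le> ((1309/2500)::real)" using pi_approx(2) by simp
  then have d6: "d \<le> (1309/2500)" using d by linarith
  have pi2: "((1309/2500)::real) < pi/2" using pi_approx(1) by simp
  have h1: "b/2 \<le> (19/100)" using b d6 by linarith
  have h1': "0 \<le> b/2" using b d by linarith
  have "(b/2)*(b/2) \<le> (19/100)*(19/100)" using h1 h1' by (intro mult_mono) auto
  then have "(49/50) * tan (b/2) \<le> b/2" using h1 h1' pi2 by (intro tan_ub) auto
  then have tb: "tan (b/2) \<le> 18/49 * d" using b by linarith
  have tb0: "0 \<le> tan (b/2)" using h1 h1' pi2 by (intro tan_pos_pi2_le) auto
  have "tan (b/2)^2 \<le> (18/49*d)^2" using tb tb0 by (intro power_mono) auto
  also have "\<dots> < (d/4) * (16/25*d)" using d by (simp add: power2_eq_square)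
  also have "\<dots> \<le> tan (d/4) * tan (d - b/2)"
  proof (rule mult_mono)
    show "d/4 \<le> tan (d/4)" using d d6 pi2 by (intro tan_ge_x) auto
    show "16/25*d \<le> tan (d - b/2)" using tan_ge_x[of "d - b/2"] d b d6 pi2 by auto
    show "0 \<le> tan (d/4)" using d d6 pi2 by (intro tan_pos_pi2_le) auto
  qed (use d in auto)
  finally show "tan (b/2) ^ 2 < tan (d/4) * tan (d - b/2)" .
  have "7/20*d \<le> tan (b/2)" using tan_ge_x[of "b/2"] h1 h1' pi2 b by auto
  then have lo: "(7/20*d)^2 \<le> tan (b/2) ^ 2" using d by (intro power_mono) auto
  have h2: "(d-b)/2 \<le> (2/25)" "0 \<le> (d-b)/2" using b d6 d by auto
  have "((d-b)/2)*((d-b)/2) \<le> (2/25)*(2/25)" using h2 by (intro mult_mono) auto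
  then have "(99/100) * tan ((d-b)/2) \<le> (d-b)/2" using h2 pi2 by (intro tan_ub) auto
  then have t2: "tan ((d-b)/2) \<le> 3/20*d/(99/100)" using b by simp
  have t20: "0 \<le> tan ((d-b)/2)" using h2 pi2 by (intro tan_pos_pi2_le) auto
  have h3: "d - b/2 \<le> (851/2500)" "0 \<le> d - b/2" using b d6 d by auto
  have "(d - b/2)*(d - b/2) \<le> (851/2500)*(851/2500)" using h3 by (intro mult_mono) auto
  then have "(47/50) * tan (d - b/2) \<le> d - b/2" using h3 pi2 by (intro tan_ub) auto
  then have t3: "tan (d - b/2) \<le> 13/20*d/(47/50)" using b by simp
  have "tan ((d-b)/2) * tan (d - b/2) \<le> (3/20*d/(99/100)) * (13/20*d/(47/50))"
    using t2 t3 t20 h3 pi2 by (intro mult_mono) (auto intro: tan_pos_pi2_le)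
  also have "\<dots> < (7/20*d)^2" using d by (simp add: power2_eq_square)
  finally show "tan ((d-b)/2) * tan (d - b/2) < tan (b/2) ^ 2" using lo by linarith
qed

lemma neg_cancel: "(a::complex) \<noteq> 0 \<Longrightarrow> a*X/((-a)*Y) = -X/Y"
  by simp

lemma mob_alg:
  fixes C K t :: real and e :: complex assumes C: "C > 1" and K: "K*(C-1) = C+1"
  defines "e \<equiv> (1 + \<i>*t)/(1 - \<i>*t) :: complex"
  shows "(C * e - 1)/(e - C) = -(1 + \<i>*(K*t))/(1 - \<i>*(K*t))"
proof -
  have n1: "1 - \<i>*t \<noteq> 0" by (simp add: complex_eq_iff)
  have n2: "1 - \<i>*(K*t) \<noteq> 0" by (simp add: complex_eq_iff)
  have kt: "K*(C-1)*t = (C+1)*t" using K by simp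
  have num: "C*(1 + \<i>*t) - (1 - \<i>*t) = (C-1)*(1 + \<i>*(K*t))"
    using kt by (simp add: complex_eq_iff algebra_simps)
  have den: "(1 + \<i>*t) - C*(1 - \<i>*t) = (1-C)*(1 - \<i>*(K*t))"
    using kt by (simp add: complex_eq_iff algebra_simps)
  have "(C * e - 1)/(e - C) = (C*(1 + \<i>*t) - (1 - \<i>*t))/((1 + \<i>*t) - C*(1 - \<i>*t))"
  proof -
    have ee: "e*(1 - \<i>*t) = 1 + \<i>*t" using n1 by (simp add: e_def)
    have "(C * e - 1)/(e - C) = ((C * e - 1)*(1 - \<i>*t))/((e - C)*(1 - \<i>*t))"
      using n1 by simp
    also have "(C * e - 1)*(1 - \<i>*t) = C*(e*(1 - \<i>*t)) - (1 - \<i>*t)" by (simp add: algebra_simps)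
    also have "(e - C)*(1 - \<i>*t) = e*(1 - \<i>*t) - C*(1 - \<i>*t)" by (simp add: algebra_simps)
    finally show ?thesis unfolding ee .
  qed
  also have "\<dots> = ((C-1)*(1 + \<i>*(K*t)))/((1-C)*(1 - \<i>*(K*t)))" unfolding num den ..
  also have "\<dots> = -(1 + \<i>*(K*t))/(1 - \<i>*(K*t))"
  proof -
    have "complex_of_real (1 - C) = - complex_of_real (C - 1)" by simp
    moreover have "complex_of_real (C - 1) \<noteq> 0" using C by simp
    ultimately show ?thesis
      using neg_cancel[of "complex_of_real (C - 1)" "1 + \<i>*(K*t)" "1 - \<i>*(K*t)"] by simp
  qed
  finally show ?thesis .
qed

lemma cis_tan: assumes "cos x \<noteq> 0"
  shows "cis (2*x) = (1 + \<i>*tan x)/(1 - \<i>*tan x)"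
proof -
  have a: "cis x = cos x * (1 + \<i>*tan x)" using assms by (simp add: complex_eq_iff tan_def)
  have b: "cis (-x) = cos x * (1 - \<i>*tan x)" using assms by (simp add: complex_eq_iff tan_def)
  have "cis (2*x) = cis x / cis (-x)" by (simp add: cis_divide)
  also have "\<dots> = (1 + \<i>*tan x)/(1 - \<i>*tan x)" unfolding a b using assms by simp
  finally show ?thesis .
qed

lemma Tmap_cis:
  assumes cb: "0 < cos (half_width g)" "cos (half_width g) < 1"
  defines "C \<equiv> 1 / cos (half_width g)"
  shows "Tmap g i (cis (side_dir g i + u)) =
    cis (side_dir g (sigma g i)) * ((C * cis u - 1)/(cis u - C))"
proof -
  define a where "a = cis (side_dir g i)"
  define s where "s = cis (side_dir g (sigma g i))"
  define r2 where "r2 = (iso_radius g)\<^sup>2"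
  have C1: "C > 1" using cb unfolding C_def by simp
  have r2: "r2 = C^2 - 1" unfolding r2_def iso_radius_def C_def using cb
    by (simp add: tan_def power_divide field_simps sin_squared_eq)
  have a0: "a \<noteq> 0" unfolding a_def by simp
  have ca: "cnj a = inverse a" unfolding a_def by (simp add: cis_cnj)
  have nz: "cis u - complex_of_real C \<noteq> 0"
  proof
    assume "cis u - complex_of_real C = 0"
    then have "cmod (cis u) = cmod (complex_of_real C)" by simp
    then show False using C1 by simp
  qed
  have z: "cis (side_dir g i + u) = a * cis u" unfolding a_def by (simp add: cis_mult)
  have ic: "iso_center g i = C * a" unfolding iso_center_def a_def C_def by simp
  have "Tmap g i (cis (side_dir g i + u)) = a * s * cnj (C * a + r2 / cnj (a * cis u - C * a))"
    unfolding Tmap_def Let_def z ic r2_def a_def s_def by (simp add: cis_mult)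
  also have "cnj (C * a + r2 / cnj (a * cis u - C * a)) = C * inverse a + r2 / (a * (cis u - C))"
    by (simp add: ca algebra_simps)
  also have "a * s * (C * inverse a + r2 / (a * (cis u - C))) = s * (C + r2 / (cis u - C))"
  proof -
    have "\<And>X::complex. a * s * (C * inverse a + r2 / (a * X)) = s * (C + r2 / X)"
      subgoal for X using a0 by (cases "X = 0") (simp_all add: field_simps)
      done
    then show ?thesis .
  qed
  also have "C + r2 / (cis u - C) = (C * cis u - 1)/(cis u - C)"
    using nz unfolding r2 by (simp add: field_simps power2_eq_square)
  finally show ?thesis unfolding s_def .
qed


lemma cis_add_2pi: "cis (x + 2*pi) = cis x"
  by (simp add: cis_mult[symmetric])

lemma arclen_cis: assumes "0 \<le> d" "d < 2*pi" shows "arclen (cis a) (cis (a + d)) = d"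
proof -
  have q: "cis (a + d) / cis a = cis d" by (simp add: cis_divide)
  show ?thesis
  proof (cases "d \<le> pi")
    case True
    have "-pi < d" using assms pi_gt_zero by linarith
    then have "Arg (cis d) = d" using True by (intro Arg_cis) auto
    then show ?thesis unfolding arclen_def q using assms by simp
  next
    case False
    have "cis d = cis ((d - 2*pi) + 2*pi)" by simp
    then have "cis d = cis (d - 2*pi)" by (simp only: cis_add_2pi)
    moreover have "Arg (cis (d - 2*pi)) = d - 2*pi" using assms False by (intro Arg_cis) auto
    ultimately show ?thesis unfolding arclen_def q using assms False by simp
  qed
qed

lemma arclen_range: "0 \<le> arclen A B" "arclen A B < 2*pi"
  unfolding arclen_def using Arg_bounded[of "B/A"] by auto

lemma cis_arclen: assumes "cmod x = 1" shows "x = cis (a + arclen (cis a) x)"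
proof -
  define z where "z = x / cis a"
  have z1: "cmod z = 1" unfolding z_def using assms by (simp add: norm_divide)
  then have z0: "z \<noteq> 0" by auto
  have cz: "cis (Arg z) = z" using cis_Arg[OF z0] z1 by (simp add: sgn_eq)
  have "cis (arclen (cis a) x) = z"
    unfolding arclen_def z_def[symmetric] using cz by (simp add: cis_add_2pi)
  then show ?thesis unfolding z_def by (simp add: cis_mult[symmetric])
qed

definition KK :: "nat \<Rightarrow> real" where
  "KK g = (1 + cos (half_width g)) / (1 - cos (half_width g))"

lemma Tcis:
  assumes cb: "0 < cos (half_width g)" "cos (half_width g) < 1" and u: "-pi < u" "u < pi"
  shows "Tmap g i (cis (side_dir g i + u)) =
    cis (side_dir g (sigma g i) + pi + 2 * arctan (KK g * tan (u/2)))"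
proof -
  define C where "C = 1 / cos (half_width g)"
  define K where "K = KK g"
  define t where "t = tan (u/2)"
  have C1: "C > 1" using cb unfolding C_def by simp
  have KC: "K*(C-1) = C+1" unfolding K_def KK_def C_def using cb by (simp add: field_simps)
  have cu: "cos (u/2) \<noteq> 0" using u by (intro order.strict_implies_not_eq[symmetric] cos_gt_zero_pi) auto
  have e: "cis u = (1 + \<i>*t)/(1 - \<i>*t)" using cis_tan[OF cu] unfolding t_def by simp
  have "Tmap g i (cis (side_dir g i + u)) = cis (side_dir g (sigma g i)) * ((C * cis u - 1)/(cis u - C))"
    using Tmap_cis[OF cb] unfolding C_def by simp
  also have "(C * cis u - 1)/(cis u - C) = -(1 + \<i>*(K*t))/(1 - \<i>*(K*t))"
    unfolding e by (rule mob_alg[OF C1 KC])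
  also have "\<dots> = - cis (2 * arctan (K*t))"
    using cis_tan[of "arctan (K*t)"] by (simp add: tan_arctan minus_divide_left)
  also have "cis (side_dir g (sigma g i)) * - cis (2 * arctan (K*t)) =
      cis (side_dir g (sigma g i) + pi + 2 * arctan (K*t))"
    by (simp add: cis_mult[symmetric])
  finally show ?thesis unfolding K_def t_def .
qed


theorem corollary8p2:
  fixes g :: nat and j :: int
  assumes "g \<ge> 2"
  shows "(\<exists>a b. a \<in> open_arc (Pt g j) (Qt g j) \<and> b \<in> open_arc (Pt g j) (Qt g j) \<and>
            arclen (Pt g j) a > arclen (Pt g j) (Qt g j) / 2 \<and>
            arclen b (Qt g j) > arclen (Pt g j) (Qt g j) / 2 \<and>
            Tmap g j a = Pt g (rho g j + 1) \<and>
            Tmap g (j - 1) b = Qt g (theta g (j - 1)))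
       \<and> (\<forall>x \<in> closed_arc (Pt g j) (Qt g j).
            arclen (Pt g j) x \<le> arclen (Pt g j) (Qt g j) / 2 \<longrightarrow>
            Tmap g j x \<in> closed_arc (Qt g (sigma g j + 1)) (Pt g (sigma g j + 2)))
       \<and> (\<forall>x \<in> closed_arc (Pt g j) (Qt g j).
            arclen x (Qt g j) \<le> arclen (Pt g j) (Qt g j) / 2 \<longrightarrow>
            Tmap g (j - 1) x \<in> closed_arc (Qt g (theta g (j - 1))) (Pt g (theta g (j - 1) + 1)))"
proof -
  define N where "N = nsides g"
  define d where "d = 2*pi/N"
  define be where "be = half_width g"
  define K where "K = KK g"
  define al where "al = side_dir g j"
  have N12: "N \<ge> 12" using assms unfolding N_def nsides_def by simp
  have d0: "0 < d" unfolding d_def using N12 by simp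
  have d6: "d \<le> pi/6" unfolding d_def using N12 by (simp add: field_simps)
  have bdef: "be = arccos (sqrt (cos d))" unfolding be_def half_width_def d_def N_def ..
  note bb = beta_bounds[OF d0 d6 bdef]
  note II = ineqs[OF d0 d6 bb(2) bb(3)]
  have pi6: "d \<le> 1309/2500" using d6 pi_approx(2) by simp
  have pi2: "(1309/2500::real) < pi/2" using pi_approx(1) by simp
  have b1: "7/10*d \<le> be" and b2: "be \<le> 18/25*d" using bb by auto
  have cd: "0 < cos d" "cos d < 1" using d0 pi6 pi2 by (auto intro!: cos_gt_zero_pi cos_monotone_0_pi[of 0 d, simplified])
  have cb: "0 < cos be" "cos be < 1" using bb(1) cd by auto
  have sd: "\<And>i. side_dir g i = real_of_int i * d" unfolding side_dir_def d_def N_def by simp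
  have sdm: "side_dir g (j - 1) = al - d" unfolding al_def sd by (simp add: algebra_simps)
  have Tc: "\<And>i u. -pi < u \<Longrightarrow> u < pi \<Longrightarrow>
      Tmap g i (cis (side_dir g i + u)) = cis (side_dir g (sigma g i) + pi + 2 * arctan (K * tan (u/2)))"
    unfolding K_def be_def using cb be_def by (intro Tcis) auto
  have K0: "0 < K" unfolding K_def KK_def using cb unfolding be_def by simp
  have tb: "tan (be/2) = sin be / (cos be + 1)" using tan_half[of "be/2"] by simp
  have Ktb: "K * tan (be/2) ^ 2 = 1"
  proof -
    have s2: "sin be ^ 2 = (1 - cos be) * (1 + cos be)" by (simp add: sin_squared_eq algebra_simps power2_eq_square)
    have aux: "(1+c)/(1-c) * ((1-c)*(1+c)/(c+1)^2) = 1" if "0 < c" "c < 1" for c :: real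
    proof -
      have "(1-c)*(1+c)/(c+1)^2 = (1-c)/(1+c)" using that by (simp add: power2_eq_square add.commute)
      then show ?thesis using that by simp
    qed
    have "K * tan (be/2) ^ 2 = (1 + cos be)/(1 - cos be) * ((1 - cos be)*(1 + cos be)/(cos be + 1)^2)"
      unfolding K_def KK_def tb be_def[symmetric] power_divide s2 ..
    also have "\<dots> = 1" using aux cb by blast
    finally show ?thesis .
  qed
  define chi where "chi u = arctan (K * tan (u/2))" for u
  have chi_mono: "chi u \<le> chi v" if "-pi < u" "u \<le> v" "v < pi" for u v
  proof -
    have "tan (u/2) \<le> tan (v/2)" using that by (intro tan_mono_le) auto
    then show ?thesis unfolding chi_def using K0 by (intro arctan_monotone' mult_left_mono) auto
  qed
  have chi_odd: "chi (-u) = - chi u" for u unfolding chi_def by (simp add: arctan_minus)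
  have tbp: "0 < tan (be/2)" using b1 d0 b2 pi6 pi2 by (intro tan_gt_zero) auto
  have chib: "chi be = pi/2 - be/2"
  proof -
    have "K * tan (be/2) = inverse (tan (be/2))" using Ktb tbp by (simp add: field_simps power2_eq_square)
    also have "\<dots> = tan (pi/2 - be/2)" by (simp add: tan_cot)
    finally show ?thesis unfolding chi_def using b1 d0 b2 pi6 pi2 by (simp add: arctan_tan)
  qed
  have tdb: "0 < tan (d - be/2)" using b1 d0 b2 pi6 pi2 by (intro tan_gt_zero) auto
  define psi where "psi = d - be/2 - pi/2"
  have chih: "chi (d/2) > - psi"
  proof -
    have "tan (be/2)^2 * K < tan (d/4) * tan (d - be/2) * K" using II(1) K0 by simp
    then have "1 < K * tan (d/4) * tan (d - be/2)" using Ktb by (simp add: algebra_simps)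
    then have "inverse (tan (d - be/2)) < K * tan (d/4)" using tdb by (simp add: field_simps)
    also have "inverse (tan (d - be/2)) = tan (-psi)" unfolding psi_def using tan_cot[of "d - be/2"] by simp
    finally have "arctan (tan (-psi)) < arctan (K * tan (d/4))" by (rule arctan_monotone)
    moreover have "arctan (tan (-psi)) = -psi" unfolding psi_def using b1 d0 b2 pi6 pi2 by (intro arctan_tan) auto
    ultimately show ?thesis unfolding chi_def by simp
  qed
  have chiq: "chi (d - be) < - psi"
  proof -
    have "tan ((d-be)/2) * tan (d - be/2) * K < tan (be/2)^2 * K" using II(2) K0 by simp
    then have "K * tan ((d-be)/2) * tan (d - be/2) < 1" using Ktb by (simp add: algebra_simps)
    then have "K * tan ((d-be)/2) < inverse (tan (d - be/2))" using tdb by (simp add: field_simps)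
    also have "inverse (tan (d - be/2)) = tan (-psi)" unfolding psi_def using tan_cot[of "d - be/2"] by simp
    finally have "arctan (K * tan ((d-be)/2)) < arctan (tan (-psi))" by (rule arctan_monotone)
    moreover have "arctan (tan (-psi)) = -psi" unfolding psi_def using b1 d0 b2 pi6 pi2 by (intro arctan_tan) auto
    ultimately show ?thesis unfolding chi_def by simp
  qed
  define ss where "ss = side_dir g (sigma g j)"
  define ss' where "ss' = side_dir g (sigma g (j - 1))"
  have pipos: "0 < pi" by simp
  have bdp: "0 \<le> 2*be - d" "2*be - d < 2*pi" "0 \<le> 2*d - 2*be" "2*d - 2*be < 2*pi"
    using b1 b2 d0 d6 pipos by linarith+
  have P: "Pt g j = cis (al - be)" unfolding Pt_def al_def be_def ..
  have Q: "Qt g j = cis ((al - be) + (2*be - d))" 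
    unfolding Qt_def be_def[symmetric] sdm by (rule arg_cong[where f=cis]) simp
  have L: "arclen (Pt g j) (Qt g j) = 2*be - d" unfolding P Q using bdp by (intro arclen_cis) auto
  have Qs1: "Qt g (sigma g j + 1) = cis (ss + be)" unfolding Qt_def ss_def be_def by simp
  have Ps2: "Pt g (sigma g j + 2) = cis ((ss + be) + (2*d - 2*be))" unfolding Pt_def ss_def be_def[symmetric] sd
    by (rule arg_cong[where f=cis]) (simp add: algebra_simps)
  have rho: "Pt g (rho g j + 1) = Pt g (sigma g j + 2)" by (simp add: rho_def add.assoc)
  have Qth: "Qt g (theta g (j - 1)) = cis (ss' - 2*d + be)" unfolding Qt_def theta_def ss'_def be_def[symmetric] sd
    by (rule arg_cong[where f=cis]) (simp add: algebra_simps)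
  have Pth: "Pt g (theta g (j - 1) + 1) = cis ((ss' - 2*d + be) + (2*d - 2*be))" unfolding Pt_def theta_def ss'_def be_def[symmetric] sd
    by (rule arg_cong[where f=cis]) (simp add: algebra_simps)
  have Lth: "arclen (Qt g (theta g (j - 1))) (Pt g (theta g (j - 1) + 1)) = 2*d - 2*be"
    unfolding Qth Pth using bdp by (intro arclen_cis) auto
  have Ls: "arclen (Qt g (sigma g j + 1)) (Pt g (sigma g j + 2)) = 2*d - 2*be"
    unfolding Qs1 Ps2 using bdp by (intro arclen_cis) auto
  have chimb: "chi (-be) = be/2 - pi/2" using chi_odd chib by simp
  show ?thesis
  proof (intro conjI)
    show "\<forall>x \<in> closed_arc (Pt g j) (Qt g j).
            arclen (Pt g j) x \<le> arclen (Pt g j) (Qt g j) / 2 \<longrightarrow>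
            Tmap g j x \<in> closed_arc (Qt g (sigma g j + 1)) (Pt g (sigma g j + 2))"
    proof (intro ballI impI)
      fix x assume xa: "x \<in> closed_arc (Pt g j) (Qt g j)" and xh: "arclen (Pt g j) x \<le> arclen (Pt g j) (Qt g j) / 2"
      define s where "s = arclen (Pt g j) x"
      have x1: "cmod x = 1" using xa unfolding closed_arc_def by simp
      have s0: "0 \<le> s" unfolding s_def by (rule arclen_range)
      have xs: "x = cis ((al - be) + s)" unfolding s_def P using cis_arclen[OF x1] .
      define u where "u = s - be"
      have u1: "-be \<le> u" "u \<le> -d/2" using s0 xh unfolding u_def s_def L by auto
      have xu: "x = cis (side_dir g j + u)" unfolding xs u_def al_def by (rule arg_cong[where f=cis]) simp
      have Tx: "Tmap g j x = cis (ss + pi + 2 * chi u)" unfolding xu ss_def chi_def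
        using u1 b1 b2 d0 d6 pipos by (intro Tc) auto
      have c1: "chi (-be) \<le> chi u" using u1 b1 b2 d0 d6 pipos by (intro chi_mono) auto
      have c2: "chi u \<le> chi (-(d/2))" using u1 b1 b2 d0 d6 pipos by (intro chi_mono) auto
      define dd where "dd = pi + 2 * chi u - be"
      have dd: "0 \<le> dd" "dd \<le> 2*d - 2*be" using c1 c2 chimb chi_odd[of "d/2"] chih
        unfolding dd_def psi_def by auto
      have Tx2: "Tmap g j x = cis ((ss + be) + dd)" unfolding Tx dd_def by (rule arg_cong[where f=cis]) simp
      have "arclen (Qt g (sigma g j + 1)) (Tmap g j x) = dd" unfolding Qs1 Tx2 using dd bdp by (intro arclen_cis) auto
      then show "Tmap g j x \<in> closed_arc (Qt g (sigma g j + 1)) (Pt g (sigma g j + 2))"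
        unfolding closed_arc_def Ls using dd Tx2 by simp
    qed
  next
    show "\<forall>x \<in> closed_arc (Pt g j) (Qt g j).
            arclen x (Qt g j) \<le> arclen (Pt g j) (Qt g j) / 2 \<longrightarrow>
            Tmap g (j - 1) x \<in> closed_arc (Qt g (theta g (j - 1))) (Pt g (theta g (j - 1) + 1))"
    proof (intro ballI impI)
      fix x assume xa: "x \<in> closed_arc (Pt g j) (Qt g j)" and xh: "arclen x (Qt g j) \<le> arclen (Pt g j) (Qt g j) / 2"
      define s where "s = arclen (Pt g j) x"
      have x1: "cmod x = 1" using xa unfolding closed_arc_def by simp
      have sL: "s \<le> 2*be - d" using xa unfolding closed_arc_def s_def L by simp
      have s0: "0 \<le> s" unfolding s_def by (rule arclen_range)
      have xs: "x = cis ((al - be) + s)" unfolding s_def P using cis_arclen[OF x1] .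
      have Q2: "Qt g j = cis (((al - be) + s) + (2*be - d - s))" unfolding Q by (rule arg_cong[where f=cis]) simp
      have "arclen x (Qt g j) = 2*be - d - s" unfolding Q2 xs using sL s0 bdp by (intro arclen_cis) auto
      then have sh: "(2*be - d)/2 \<le> s" using xh unfolding L by simp
      define u where "u = d - be + s"
      have u1: "d/2 \<le> u" "u \<le> be" using sh sL unfolding u_def by auto
      have xu: "x = cis (side_dir g (j - 1) + u)" unfolding xs u_def sdm by (rule arg_cong[where f=cis]) simp
      have Tx: "Tmap g (j - 1) x = cis (ss' + pi + 2 * chi u)" unfolding xu ss'_def chi_def
        using u1 b1 b2 d0 d6 pipos by (intro Tc) auto
      have c1: "chi (d/2) \<le> chi u" using u1 b1 b2 d0 d6 pipos by (intro chi_mono) auto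
      have c2: "chi u \<le> chi be" using u1 b1 b2 d0 d6 pipos by (intro chi_mono) auto
      define dd where "dd = 2 * chi u - pi + 2*d - be"
      have dd: "0 \<le> dd" "dd \<le> 2*d - 2*be" using c1 c2 chib chih
        unfolding dd_def psi_def by auto
      have "Tmap g (j - 1) x = cis (((ss' - 2*d + be) + dd) + 2*pi)" unfolding Tx dd_def by (rule arg_cong[where f=cis]) simp
      then have Tx2: "Tmap g (j - 1) x = cis ((ss' - 2*d + be) + dd)" by (simp only: cis_add_2pi)
      have "arclen (Qt g (theta g (j - 1))) (Tmap g (j - 1) x) = dd" unfolding Qth Tx2 using dd bdp by (intro arclen_cis) auto
      then show "Tmap g (j - 1) x \<in> closed_arc (Qt g (theta g (j - 1))) (Pt g (theta g (j - 1) + 1))"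
        unfolding closed_arc_def Lth using dd Tx2 by simp
    qed
  next
    show "\<exists>a b. a \<in> open_arc (Pt g j) (Qt g j) \<and> b \<in> open_arc (Pt g j) (Qt g j) \<and>
            arclen (Pt g j) a > arclen (Pt g j) (Qt g j) / 2 \<and>
            arclen b (Qt g j) > arclen (Pt g j) (Qt g j) / 2 \<and>
            Tmap g j a = Pt g (rho g j + 1) \<and>
            Tmap g (j - 1) b = Qt g (theta g (j - 1))"
    proof -
      define ua where "ua = 2 * arctan (tan psi / K)"
      have ua1: "-pi < ua" "ua < pi" unfolding ua_def using arctan_lbound[of "tan psi / K"] arctan_ubound[of "tan psi / K"] by auto
      have psr: "-(pi/2) < psi" "psi < pi/2" unfolding psi_def using b1 b2 d0 d6 pi6 pi2 by auto
      have chua: "chi ua = psi" unfolding chi_def ua_def using K0 psr by (simp add: tan_arctan arctan_tan)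
      have ua2: "-(d/2) < ua"
      proof (rule ccontr)
        assume "\<not> -(d/2) < ua"
        then have "chi ua \<le> chi (-(d/2))" using ua1 d0 pipos by (intro chi_mono) auto
        then show False using chua chi_odd[of "d/2"] chih by simp
      qed
      have ua3: "ua < be - d"
      proof (rule ccontr)
        assume "\<not> ua < be - d"
        then have "chi (be - d) \<le> chi ua" using ua1 b1 b2 d0 d6 pipos by (intro chi_mono) auto
        then show False using chua chi_odd[of "d - be"] chiq by simp
      qed
      define a where "a = cis (side_dir g j + ua)"
      define bp where "bp = cis (side_dir g (j - 1) + (-ua))"
      have Ta: "Tmap g j a = cis (ss + pi + 2 * psi)" unfolding a_def ss_def using Tc[OF ua1] chua unfolding chi_def by simp
      have Ta2: "Tmap g j a = Pt g (rho g j + 1)" unfolding rho Ps2 Ta psi_def by (rule arg_cong[where f=cis]) simp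
      have Tb: "Tmap g (j - 1) bp = cis (ss' + pi + 2 * chi (-ua))" unfolding bp_def ss'_def chi_def
        using ua1 by (intro Tc) auto
      have "Tmap g (j - 1) bp = cis ((ss' - 2*d + be) + 2*pi)" unfolding Tb chi_odd chua psi_def
        by (rule arg_cong[where f=cis]) simp
      then have Tb2: "Tmap g (j - 1) bp = Qt g (theta g (j - 1))" unfolding Qth by (simp only: cis_add_2pi)
      have a2: "a = cis ((al - be) + (ua + be))" unfolding a_def al_def by (rule arg_cong[where f=cis]) simp
      have la: "arclen (Pt g j) a = ua + be" unfolding P a2 using ua2 ua3 b1 b2 d0 d6 pipos by (intro arclen_cis) auto
      have b2': "bp = cis ((al - be) + (be - d - ua))" unfolding bp_def sdm by (rule arg_cong[where f=cis]) simp
      have lb: "arclen (Pt g j) bp = be - d - ua" unfolding P b2' using ua2 ua3 b1 b2 d0 d6 pipos by (intro arclen_cis) auto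
      have Q3: "Qt g j = cis ((al - d - ua) + (be + ua))" unfolding Q by (rule arg_cong[where f=cis]) simp
      have b3: "bp = cis (al - d - ua)" unfolding bp_def sdm by (rule arg_cong[where f=cis]) simp
      have lb2: "arclen bp (Qt g j) = be + ua" unfolding Q3 b3 using ua2 ua3 b1 b2 d0 d6 pipos by (intro arclen_cis) auto
      have "a \<in> open_arc (Pt g j) (Qt g j)" unfolding open_arc_def L using la ua2 ua3 b1 d0 by (simp add: a_def)
      moreover have "bp \<in> open_arc (Pt g j) (Qt g j)" unfolding open_arc_def L using lb ua2 ua3 b1 d0 by (simp add: bp_def)
      moreover have "arclen (Pt g j) a > arclen (Pt g j) (Qt g j) / 2" unfolding la L using ua2 by simp
      moreover have "arclen bp (Qt g j) > arclen (Pt g j) (Qt g j) / 2" unfolding lb2 L using ua2 by simp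
      ultimately show ?thesis using Ta2 Tb2 by blast
    qed
  qed
qed

end
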